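(* Let $n\in\mathbb N$ and let $X\in\mathcal H$ be independent of $\mathcal F_n$. Suppose either (i) $X$ is bounded below, or (ii) $X\in L^1_b$. Then $\mathcal E_n(X)=\mathcal E(X)$ q.s.
   Context: Standing setting. $(\Omega,\mathcal F)$ is a measurable space with a discrete-time filtration $(\mathcal F_t)_{t\in\mathbb N}$, $\mathcal F_0$ trivial and $\mathcal F=\sigma(\bigcup_t\mathcal F_t)$. $\mathcal H$ is a linear space of $\mathcal F$-measurable real functions on $\Omega$ containing the constants, such that $X\in\mathcal H$ implies $|X|\in\mathcal H$ and $I_AX\in\mathcal H$ for all $A\in\mathcal F$; $\mathcal H_t:=\{X\in\mathcal H: X \text{ is } \mathcal F_t\text{-measurable}\}$. $(\mathcal E_t)$ is an $\mathcal{SL}$-expectation (a family of maps $\mathcal E_t:\mathcal H\to\mathcal H_t$ that are monotone, time-consistent $\mathcal E_s\circ\mathcal E_t=\mathcal E_s$ for $s\le t$, satisfy $\mathcal E_t(I_AY)=I_A\mathcal E_t(Y)$ for $A\in\mathcal F_t$, $\mathcal E_t(Y)=Y$ for $Y\in\mathcal H_t$, are subadditive, satisfy $\mathcal E_t(\lambda Y)=\lambda^+\mathcal E_t(Y)+\lambda^-\mathcal E_t(-Y)$ for $\lambda\in\mathcal H_t$, and $\mathcal E_0(X_i)\to0$ whenever $X_i\downarrow0$ pointwise); $\mathcal E:=\mathcal E_0$. "q.s." means outside a set $N$ with $\mathcal E(I_N)=0$. Independence: a random variable $Y\in\mathcal H$ is independent of $Z=(Z_1,\dots,Z_k)$ ($Z_i\in\mathcal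 H$) under $\mathcal E$ if for every measurable $\varphi$ on $\mathbb R^{k+1}$ with $\varphi(Z,Y)\in\mathcal H$ and $\varphi(z,Y)\in\mathcal H$ for all $z$, one has $\mathcal E[\varphi(Z,Y)]=\mathcal E[\bar\varphi(Z)]$ where $\bar\varphi(z):=\mathcal E[\varphi(z,Y)]$. $X$ is independent of $\mathcal F_n$ if $X$ is independent of $I_A$ for every $A\in\mathcal F_n$. $\|X\|_1:=\mathcal E(|X|)$; $L^1$ is the completion of $\{X\in\mathcal H:\|X\|_1<\infty\}$ modulo null elements; $L^1_b$ is the completion of the bounded elements of $\mathcal H$ under $\|\cdot\|_1$, equivalently $L^1_b=\{X\in L^1:\lim_{n\to\infty}\mathcal E(|X|I_{\{|X|>n\}})=0\}$. *)

theory Defs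
  imports "HOL-Analysis.Analysis"
begin

definition meas :: "'a set set \<Rightarrow> ('a \<Rightarrow> real) \<Rightarrow> bool" where
  "meas S X \<longleftrightarrow> (\<forall>B\<in>sets borel. X -` B \<in> S)"

definition filtration :: "(nat \<Rightarrow> 'a set set) \<Rightarrow> bool" where
  "filtration F \<longleftrightarrow> (\<forall>t. sigma_algebra UNIV (F t)) \<and> (\<forall>s t. s \<le> t \<longrightarrow> F s \<subseteq> F t)
     \<and> F 0 = {{}, UNIV}"

definition Finf :: "(nat \<Rightarrow> 'a set set) \<Rightarrow> 'a set set" where
  "Finf F = sigma_sets UNIV (\<Union>t. F t)"

definition Hspace :: "(nat \<Rightarrow> 'a set set) \<Rightarrow> ('a \<Rightarrow> real) set \<Rightarrow> bool" where
  "Hspace F H \<longleftrightarrow>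
     (\<forall>X\<in>H. meas (Finf F) X) \<and>
     (\<forall>X\<in>H. \<forall>Y\<in>H. (\<lambda>\<omega>. X \<omega> + Y \<omega>) \<in> H) \<and>
     (\<forall>c. \<forall>X\<in>H. (\<lambda>\<omega>. c * X \<omega>) \<in> H) \<and>
     (\<forall>c. (\<lambda>_. c) \<in> H) \<and>
     (\<forall>X\<in>H. (\<lambda>\<omega>. \<bar>X \<omega>\<bar>) \<in> H) \<and>
     (\<forall>X\<in>H. \<forall>A\<in>Finf F. (\<lambda>\<omega>. indicator A \<omega> * X \<omega>) \<in> H)"

definition Ht :: "(nat \<Rightarrow> 'a set set) \<Rightarrow> ('a \<Rightarrow> real) set \<Rightarrow> nat \<Rightarrow> ('a \<Rightarrow> real) set" where
  "Ht F H t = {X \<in> H. meas (F t) X}"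

text \<open>The unconditional expectation E = E_0 (constant since F 0 is trivial; we read off
  its value at an arbitrary fixed point).\<close>
definition EE :: "(nat \<Rightarrow> ('a \<Rightarrow> real) \<Rightarrow> ('a \<Rightarrow> real)) \<Rightarrow> ('a \<Rightarrow> real) \<Rightarrow> real" where
  "EE E X = E 0 X undefined"

definition SL_expectation ::
  "(nat \<Rightarrow> 'a set set) \<Rightarrow> ('a \<Rightarrow> real) set \<Rightarrow> (nat \<Rightarrow> ('a \<Rightarrow> real) \<Rightarrow> ('a \<Rightarrow> real)) \<Rightarrow> bool" where
  "SL_expectation F H E \<longleftrightarrow>
     (\<forall>t. \<forall>X\<in>H. E t X \<in> Ht F H t) \<and>
     (\<forall>t. \<forall>X\<in>H. \<forall>Y\<in>H. (\<forall>\<omega>. X \<omega> \<le> Y \<omega>) \<longrightarrow> (\<forall>\<omega>. E t X \<omega> \<le> E t Y \<omega>)) \<and>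
     (\<forall>s t. \<forall>X\<in>H. s \<le> t \<longrightarrow> E s (E t X) = E s X) \<and>
     (\<forall>t. \<forall>A\<in>F t. \<forall>Y\<in>H. E t (\<lambda>\<omega>. indicator A \<omega> * Y \<omega>) = (\<lambda>\<omega>. indicator A \<omega> * E t Y \<omega>)) \<and>
     (\<forall>t. \<forall>Y\<in>Ht F H t. E t Y = Y) \<and>
     (\<forall>t. \<forall>X\<in>H. \<forall>Y\<in>H. \<forall>\<omega>. E t (\<lambda>\<omega>. X \<omega> + Y \<omega>) \<omega> \<le> E t X \<omega> + E t Y \<omega>) \<and>
     (\<forall>t. \<forall>l\<in>Ht F H t. \<forall>Y\<in>H.
        E t (\<lambda>\<omega>. l \<omega> * Y \<omega>) =
        (\<lambda>\<omega>. max (l \<omega>) 0 * E t Y \<omega> + max (- l \<omega>) 0 * E t (\<lambda>\<omega>. - Y \<omega>) \<omega>)) \<and>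
     (\<forall>Xs. (\<forall>i. Xs i \<in> H) \<longrightarrow> (\<forall>\<omega>. decseq (\<lambda>i. Xs i \<omega>) \<and> (\<lambda>i. Xs i \<omega>) \<longlonglongrightarrow> 0)
        \<longrightarrow> (\<lambda>i. EE E (Xs i)) \<longlonglongrightarrow> 0)"

definition indep_of :: "('a \<Rightarrow> real) set \<Rightarrow> (nat \<Rightarrow> ('a \<Rightarrow> real) \<Rightarrow> ('a \<Rightarrow> real))
    \<Rightarrow> ('a \<Rightarrow> real) \<Rightarrow> ('a \<Rightarrow> real) \<Rightarrow> bool" where
  "indep_of H E Y Z \<longleftrightarrow>
     (\<forall>\<phi> :: real \<times> real \<Rightarrow> real. \<phi> \<in> borel_measurable borel \<longrightarrow>
        (\<lambda>\<omega>. \<phi> (Z \<omega>, Y \<omega>)) \<in> H \<longrightarrow> (\<forall>z. (\<lambda>\<omega>. \<phi> (z, Y \<omega>)) \<in> H) \<longrightarrow>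
        EE E (\<lambda>\<omega>. \<phi> (Z \<omega>, Y \<omega>)) = EE E (\<lambda>\<omega>. (\<lambda>z. EE E (\<lambda>\<omega>'. \<phi> (z, Y \<omega>'))) (Z \<omega>)))"

definition indep_of_F :: "(nat \<Rightarrow> 'a set set) \<Rightarrow> ('a \<Rightarrow> real) set
    \<Rightarrow> (nat \<Rightarrow> ('a \<Rightarrow> real) \<Rightarrow> ('a \<Rightarrow> real)) \<Rightarrow> ('a \<Rightarrow> real) \<Rightarrow> nat \<Rightarrow> bool" where
  "indep_of_F F H E X n \<longleftrightarrow> (\<forall>A\<in>F n. indep_of H E X (indicator A))"

text \<open>Membership in L^1_b for an element of H, via the characterization
  lim E(|X| I_{|X|>n}) = 0 (norm ||X||_1 = E|X| is finite for real-valued E).\<close>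
definition in_L1b :: "(nat \<Rightarrow> ('a \<Rightarrow> real) \<Rightarrow> ('a \<Rightarrow> real)) \<Rightarrow> ('a \<Rightarrow> real) \<Rightarrow> bool" where
  "in_L1b E X \<longleftrightarrow>
     (\<lambda>n::nat. EE E (\<lambda>\<omega>. \<bar>X \<omega>\<bar> * indicator {\<omega>'. \<bar>X \<omega>'\<bar> > real n} \<omega>)) \<longlonglongrightarrow> 0"

definition qs_eq :: "(nat \<Rightarrow> 'a set set) \<Rightarrow> (nat \<Rightarrow> ('a \<Rightarrow> real) \<Rightarrow> ('a \<Rightarrow> real))
    \<Rightarrow> ('a \<Rightarrow> real) \<Rightarrow> ('a \<Rightarrow> real) \<Rightarrow> bool" where
  "qs_eq F E X Y \<longleftrightarrow> (\<exists>N\<in>Finf F. EE E (indicator N) = 0 \<and> (\<forall>\<omega>. \<omega> \<notin> N \<longrightarrow> X \<omega> = Y \<omega>))"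

end

theory Submission
  imports Defs
begin

context
  fixes F :: "nat \<Rightarrow> 'a set set" and H :: "('a \<Rightarrow> real) set"
    and E :: "nat \<Rightarrow> ('a \<Rightarrow> real) \<Rightarrow> ('a \<Rightarrow> real)"
  assumes filt: "filtration F" and hs: "Hspace F H" and sl: "SL_expectation F H E"
begin

lemma const_H: "(\<lambda>_. c) \<in> H"
  using hs unfolding Hspace_def by blast

lemma add_H: "X \<in> H \<Longrightarrow> Y \<in> H \<Longrightarrow> (\<lambda>\<omega>. X \<omega> + Y \<omega>) \<in> H"
  using hs unfolding Hspace_def by blast

lemma scale_H: "X \<in> H \<Longrightarrow> (\<lambda>\<omega>. c * X \<omega>) \<in> H"
  using hs unfolding Hspace_def by blast

lemma sa: "sigma_algebra UNIV (F t)"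
  using filt unfolding filtration_def by blast

lemma Ft_Finf: "A \<in> F t \<Longrightarrow> A \<in> Finf F"
  unfolding Finf_def by (rule sigma_sets.Basic) blast

lemma compl_F: "A \<in> F t \<Longrightarrow> - A \<in> F t"
proof -
  assume "A \<in> F t"
  then have "UNIV - A \<in> F t" using sa[of t] by (simp add: algebra.compl_sets sigma_algebra.axioms(1) sigma_algebra_def)
  then show ?thesis by (simp add: Compl_eq_Diff_UNIV)
qed

lemma indmul_H: "X \<in> H \<Longrightarrow> A \<in> Finf F \<Longrightarrow> (\<lambda>\<omega>. indicator A \<omega> * X \<omega>) \<in> H"
  using hs unfolding Hspace_def by blast

lemma ind_H: "A \<in> Finf F \<Longrightarrow> indicator A \<in> H"
proof -
  assume "A \<in> Finf F"
  then have "(\<lambda>\<omega>. indicator A \<omega> * (\<lambda>_. 1::real) \<omega>) \<in> H" using indmul_H const_H by blast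
  then show ?thesis by simp
qed

lemma const_Ht: "(\<lambda>_. c) \<in> Ht F H t"
proof -
  have "meas (F t) (\<lambda>_. c)"
    unfolding meas_def
  proof
    fix B :: "real set"
    have "(\<lambda>_::'a. c) -` B = {} \<or> (\<lambda>_::'a. c) -` B = UNIV" by auto
    moreover have "{} \<in> F t" "UNIV \<in> F t" using sa[of t]
      by (auto simp: sigma_algebra_iff2)
    ultimately show "(\<lambda>_::'a. c) -` B \<in> F t" by auto
  qed
  then show ?thesis unfolding Ht_def using const_H by auto
qed

lemmas slU = sl[unfolded SL_expectation_def]
lemmas sl1 = slU[THEN conjunct1]
lemmas sl2 = slU[THEN conjunct2, THEN conjunct1]
lemmas sl3 = slU[THEN conjunct2, THEN conjunct2, THEN conjunct1]
lemmas sl4 = slU[THEN conjunct2, THEN conjunct2, THEN conjunct2, THEN conjunct1]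
lemmas sl5 = slU[THEN conjunct2, THEN conjunct2, THEN conjunct2, THEN conjunct2, THEN conjunct1]
lemmas sl6 = slU[THEN conjunct2, THEN conjunct2, THEN conjunct2, THEN conjunct2, THEN conjunct2, THEN conjunct1]
lemmas sl7 = slU[THEN conjunct2, THEN conjunct2, THEN conjunct2, THEN conjunct2, THEN conjunct2, THEN conjunct2, THEN conjunct1]
lemmas sl8 = slU[THEN conjunct2, THEN conjunct2, THEN conjunct2, THEN conjunct2, THEN conjunct2, THEN conjunct2, THEN conjunct2]

lemma E_Ht: "X \<in> H \<Longrightarrow> E t X \<in> Ht F H t"
  using sl1 by blast

lemma E_H: "X \<in> H \<Longrightarrow> E t X \<in> H"
  using E_Ht unfolding Ht_def by blast

lemma E_const: "E t (\<lambda>_. c) = (\<lambda>_. c)"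
  using sl5 const_Ht by blast

lemma E_mono: "X \<in> H \<Longrightarrow> Y \<in> H \<Longrightarrow> (\<And>\<omega>. X \<omega> \<le> Y \<omega>) \<Longrightarrow> E t X \<omega> \<le> E t Y \<omega>"
  using sl2 by blast

lemma E_tower: "X \<in> H \<Longrightarrow> s \<le> t \<Longrightarrow> E s (E t X) = E s X"
  using sl3 by blast

lemma E_ind: "A \<in> F t \<Longrightarrow> Y \<in> H \<Longrightarrow>
   E t (\<lambda>\<omega>. indicator A \<omega> * Y \<omega>) = (\<lambda>\<omega>. indicator A \<omega> * E t Y \<omega>)"
  using sl4 by blast

lemma E_sub: "X \<in> H \<Longrightarrow> Y \<in> H \<Longrightarrow> E t (\<lambda>\<omega>. X \<omega> + Y \<omega>) \<omega> \<le> E t X \<omega> + E t Y \<omega>"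
  using sl6 by blast

lemma E_cont: "(\<And>i. Xs i \<in> H) \<Longrightarrow> (\<And>\<omega>. decseq (\<lambda>i. Xs i \<omega>)) \<Longrightarrow> (\<And>\<omega>. (\<lambda>i. Xs i \<omega>) \<longlonglongrightarrow> 0)
  \<Longrightarrow> (\<lambda>i. EE E (Xs i)) \<longlonglongrightarrow> 0"
  using sl8 by blast

lemma E_homog:
  assumes "X \<in> H" "b \<ge> 0"
  shows "E t (\<lambda>\<omega>. b * X \<omega>) = (\<lambda>\<omega>. b * E t X \<omega>)"
proof -
  have "E t (\<lambda>\<omega>. (\<lambda>_. b) \<omega> * X \<omega>) =
     (\<lambda>\<omega>. max ((\<lambda>_. b) \<omega>) 0 * E t X \<omega> + max (- (\<lambda>_. b) \<omega>) 0 * E t (\<lambda>\<omega>. - X \<omega>) \<omega>)"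
    using sl7[rule_format, OF const_Ht[of b t] assms(1)] by simp
  then show ?thesis using assms(2) by (simp add: max_def)
qed

lemma E_transl:
  assumes "X \<in> H"
  shows "E t (\<lambda>\<omega>. X \<omega> + a) \<omega> = E t X \<omega> + a"
proof -
  have XaH: "(\<lambda>\<omega>. X \<omega> + a) \<in> H" using add_H[OF assms const_H] .
  have "E t (\<lambda>\<omega>. X \<omega> + (\<lambda>_. a) \<omega>) \<omega> \<le> E t X \<omega> + E t (\<lambda>_. a) \<omega>"
    using E_sub[OF assms const_H] .
  then have 1: "E t (\<lambda>\<omega>. X \<omega> + a) \<omega> \<le> E t X \<omega> + a" by (simp add: E_const)
  have "E t (\<lambda>\<omega>. (\<lambda>\<omega>. X \<omega> + a) \<omega> + (\<lambda>_. -a) \<omega>) \<omega> \<le> E t (\<lambda>\<omega>. X \<omega> + a) \<omega> + E t (\<lambda>_. -a) \<omega>"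
    using E_sub[OF XaH const_H] .
  then have 2: "E t X \<omega> \<le> E t (\<lambda>\<omega>. X \<omega> + a) \<omega> - a" by (simp add: E_const)
  from 1 2 show ?thesis by linarith
qed

lemma EE_nonneg: "A \<in> Finf F \<Longrightarrow> EE E (indicator A) \<ge> 0"
proof -
  assume A: "A \<in> Finf F"
  have "E 0 (\<lambda>_. 0) undefined \<le> E 0 (indicator A) undefined"
    by (rule E_mono[OF const_H ind_H[OF A]]) simp
  then show ?thesis unfolding EE_def by (simp add: E_const)
qed

lemma key:
  assumes X: "X \<in> H" and ind: "indep_of_F F H E X n" and A: "A \<in> F n"
  shows "EE E (\<lambda>\<omega>. indicator A \<omega> * E n X \<omega> + (1 - indicator A \<omega>) * k) =
         EE E (\<lambda>\<omega>. indicator A \<omega> * EE E X + (1 - indicator A \<omega>) * k)"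
proof -
  have AF: "A \<in> Finf F" using Ft_Finf[OF A] .
  have cA: "- A \<in> F n" using compl_F[OF A] .
  have cAF: "- A \<in> Finf F" using Ft_Finf[OF cA] .
  define U where "U = (\<lambda>\<omega>. indicator A \<omega> * X \<omega> + (1 - indicator A \<omega>) * k)"
  have U2: "U = (\<lambda>\<omega>. indicator A \<omega> * X \<omega> + indicator (- A) \<omega> * (\<lambda>_. k) \<omega>)"
    unfolding U_def by (auto simp: indicator_def)
  have UH: "U \<in> H" unfolding U2 by (intro add_H indmul_H X AF cAF const_H)
  have EU: "E n U = (\<lambda>\<omega>. indicator A \<omega> * E n X \<omega> + (1 - indicator A \<omega>) * k)"
  proof
    fix \<omega>
    show "E n U \<omega> = indicator A \<omega> * E n X \<omega> + (1 - indicator A \<omega>) * k"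
    proof (cases "\<omega> \<in> A")
      case True
      have "(\<lambda>\<omega>. indicator A \<omega> * U \<omega>) = (\<lambda>\<omega>. indicator A \<omega> * X \<omega>)"
        unfolding U_def by (auto simp: indicator_def)
      then have "(\<lambda>\<omega>. indicator A \<omega> * E n U \<omega>) = (\<lambda>\<omega>. indicator A \<omega> * E n X \<omega>)"
        using E_ind[OF A UH] E_ind[OF A X] by simp
      then have "indicator A \<omega> * E n U \<omega> = indicator A \<omega> * E n X \<omega>" by metis
      then show ?thesis using True by simp
    next
      case False
      have "(\<lambda>\<omega>. indicator (-A) \<omega> * U \<omega>) = (\<lambda>\<omega>. indicator (-A) \<omega> * (\<lambda>_. k) \<omega>)"
        unfolding U_def by (auto simp: indicator_def)
      then have "(\<lambda>\<omega>. indicator (-A) \<omega> * E n U \<omega>) = (\<lambda>\<omega>. indicator (-A) \<omega> * E n (\<lambda>_. k) \<omega>)"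
        using E_ind[OF cA UH] E_ind[OF cA const_H] by simp
      then have "indicator (-A) \<omega> * E n U \<omega> = indicator (-A) \<omega> * k" using E_const by metis
      then show ?thesis using False by simp
    qed
  qed
  have tow: "EE E U = EE E (E n U)" unfolding EE_def using E_tower[OF UH, of 0 n] by simp
  define \<phi> where "\<phi> = (\<lambda>p::real\<times>real. fst p * snd p + (1 - fst p) * k)"
  have phim: "\<phi> \<in> borel_measurable borel" unfolding \<phi>_def borel_prod[symmetric] by measurable
  have i: "indep_of H E X (indicator A)" using ind A unfolding indep_of_F_def by blast
  have h1: "(\<lambda>\<omega>. \<phi> (indicator A \<omega>, X \<omega>)) \<in> H" using UH unfolding U_def \<phi>_def by simp
  have h2: "\<forall>z. (\<lambda>\<omega>. \<phi> (z, X \<omega>)) \<in> H"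
  proof
    fix z
    have "(\<lambda>\<omega>. (\<lambda>\<omega>. z * X \<omega>) \<omega> + (\<lambda>_. (1 - z) * k) \<omega>) \<in> H"
      by (intro add_H scale_H X const_H)
    then show "(\<lambda>\<omega>. \<phi> (z, X \<omega>)) \<in> H" unfolding \<phi>_def by simp
  qed
  have eq: "EE E (\<lambda>\<omega>. \<phi> (indicator A \<omega>, X \<omega>)) =
     EE E (\<lambda>\<omega>. (\<lambda>z. EE E (\<lambda>\<omega>'. \<phi> (z, X \<omega>'))) (indicator A \<omega>))"
    using i phim h1 h2 unfolding indep_of_def by blast
  have inner: "(\<lambda>\<omega>. (\<lambda>z. EE E (\<lambda>\<omega>'. \<phi> (z, X \<omega>'))) (indicator A \<omega>)) =
     (\<lambda>\<omega>. indicator A \<omega> * EE E X + (1 - indicator A \<omega>) * k)"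
  proof
    fix \<omega>
    show "(\<lambda>z. EE E (\<lambda>\<omega>'. \<phi> (z, X \<omega>'))) (indicator A \<omega>) = indicator A \<omega> * EE E X + (1 - indicator A \<omega>) * k"
    proof (cases "\<omega> \<in> A")
      case True
      then show ?thesis unfolding \<phi>_def by simp
    next
      case False
      then show ?thesis unfolding \<phi>_def by (simp add: EE_def E_const)
    qed
  qed
  have "EE E U = EE E (\<lambda>\<omega>. \<phi> (indicator A \<omega>, X \<omega>))" unfolding U_def \<phi>_def by simp
  then show ?thesis using tow EU eq inner by simp
qed

lemma meas_set: "X \<in> H \<Longrightarrow> B \<in> sets borel \<Longrightarrow> (E t X) -` B \<in> F t"
  using E_Ht unfolding Ht_def meas_def by blast

lemma zero_up:
  assumes X: "X \<in> H" and ind: "indep_of_F F H E X n" and e: "\<epsilon> > 0"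
  shows "EE E (indicator {\<omega>. E n X \<omega> \<ge> EE E X + \<epsilon>}) = 0"
proof -
  let ?c = "EE E X" and ?Y = "E n X"
  define A where "A = {\<omega>. ?Y \<omega> \<ge> ?c + \<epsilon>}"
  have A: "A \<in> F n"
  proof -
    have "?Y -` {?c + \<epsilon>..} \<in> F n" by (rule meas_set[OF X]) simp
    moreover have "?Y -` {?c + \<epsilon>..} = A" unfolding A_def by auto
    ultimately show ?thesis by simp
  qed
  have AF: "A \<in> Finf F" using Ft_Finf[OF A] .
  have k: "EE E (\<lambda>\<omega>. indicator A \<omega> * ?Y \<omega> + (1 - indicator A \<omega>) * ?c) =
         EE E (\<lambda>\<omega>. indicator A \<omega> * ?c + (1 - indicator A \<omega>) * ?c)"
    by (rule key[OF X ind A])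
  have r: "(\<lambda>\<omega>. indicator A \<omega> * ?c + (1 - indicator A \<omega>) * ?c) = (\<lambda>_. ?c)"
    by (auto simp: algebra_simps)
  have lhsH: "(\<lambda>\<omega>. indicator A \<omega> * ?Y \<omega> + (1 - indicator A \<omega>) * ?c) \<in> H"
  proof -
    have "(\<lambda>\<omega>. indicator A \<omega> * ?Y \<omega> + indicator (-A) \<omega> * (\<lambda>_. ?c) \<omega>) \<in> H"
      by (intro add_H indmul_H E_H X AF Ft_Finf[OF compl_F[OF A]] const_H)
    moreover have "(\<lambda>\<omega>. indicator A \<omega> * ?Y \<omega> + indicator (-A) \<omega> * (\<lambda>_. ?c) \<omega>) =
       (\<lambda>\<omega>. indicator A \<omega> * ?Y \<omega> + (1 - indicator A \<omega>) * ?c)"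
      by (auto simp: indicator_def)
    ultimately show ?thesis by simp
  qed
  have sH: "(\<lambda>\<omega>. \<epsilon> * indicator A \<omega>) \<in> H" by (intro scale_H ind_H AF)
  have "E 0 (\<lambda>\<omega>. (\<lambda>\<omega>. \<epsilon> * indicator A \<omega>) \<omega> + ?c) undefined
     \<le> E 0 (\<lambda>\<omega>. indicator A \<omega> * ?Y \<omega> + (1 - indicator A \<omega>) * ?c) undefined"
    by (rule E_mono[OF add_H[OF sH const_H] lhsH]) (auto simp: indicator_def A_def)
  also have "\<dots> = ?c" using k r unfolding EE_def by (simp add: E_const)
  finally have "E 0 (\<lambda>\<omega>. \<epsilon> * indicator A \<omega>) undefined + ?c \<le> ?c"
    using E_transl[OF sH] by simp
  then have "\<epsilon> * EE E (indicator A) \<le> 0"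
    unfolding EE_def using E_homog[OF ind_H[OF AF], of \<epsilon> 0] e by simp
  then have "EE E (indicator A) \<le> 0" using e by (simp add: mult_le_0_iff)
  then show ?thesis using EE_nonneg[OF AF] unfolding A_def by simp
qed

lemma zero_down:
  assumes X: "X \<in> H" and ind: "indep_of_F F H E X n" and e: "\<epsilon> > 0"
  shows "EE E (indicator {\<omega>. E n X \<omega> \<le> EE E X - \<epsilon>}) = 0"
proof -
  let ?c = "EE E X" and ?Y = "E n X"
  define A where "A = {\<omega>. ?Y \<omega> \<le> ?c - \<epsilon>}"
  have A: "A \<in> F n"
  proof -
    have "?Y -` {..?c - \<epsilon>} \<in> F n" by (rule meas_set[OF X]) simp
    moreover have "?Y -` {..?c - \<epsilon>} = A" unfolding A_def by auto
    ultimately show ?thesis by simp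
  qed
  have AF: "A \<in> Finf F" using Ft_Finf[OF A] .
  have k: "EE E (\<lambda>\<omega>. indicator A \<omega> * ?Y \<omega> + (1 - indicator A \<omega>) * (?c - \<epsilon>)) =
         EE E (\<lambda>\<omega>. indicator A \<omega> * ?c + (1 - indicator A \<omega>) * (?c - \<epsilon>))"
    by (rule key[OF X ind A])
  have r: "(\<lambda>\<omega>. indicator A \<omega> * ?c + (1 - indicator A \<omega>) * (?c - \<epsilon>)) =
     (\<lambda>\<omega>. (\<lambda>\<omega>. \<epsilon> * indicator A \<omega>) \<omega> + (?c - \<epsilon>))"
    by (auto simp: algebra_simps)
  have lhsH: "(\<lambda>\<omega>. indicator A \<omega> * ?Y \<omega> + (1 - indicator A \<omega>) * (?c - \<epsilon>)) \<in> H"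
  proof -
    have "(\<lambda>\<omega>. indicator A \<omega> * ?Y \<omega> + indicator (-A) \<omega> * (\<lambda>_. ?c - \<epsilon>) \<omega>) \<in> H"
      by (intro add_H indmul_H E_H X AF Ft_Finf[OF compl_F[OF A]] const_H)
    moreover have "(\<lambda>\<omega>. indicator A \<omega> * ?Y \<omega> + indicator (-A) \<omega> * (\<lambda>_. ?c - \<epsilon>) \<omega>) =
       (\<lambda>\<omega>. indicator A \<omega> * ?Y \<omega> + (1 - indicator A \<omega>) * (?c - \<epsilon>))"
      by (auto simp: indicator_def)
    ultimately show ?thesis by simp
  qed
  have sH: "(\<lambda>\<omega>. \<epsilon> * indicator A \<omega>) \<in> H" by (intro scale_H ind_H AF)
  have "E 0 (\<lambda>\<omega>. indicator A \<omega> * ?Y \<omega> + (1 - indicator A \<omega>) * (?c - \<epsilon>)) undefined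
     \<le> E 0 (\<lambda>_. ?c - \<epsilon>) undefined"
    by (rule E_mono[OF lhsH const_H]) (auto simp: indicator_def A_def)
  then have "E 0 (\<lambda>\<omega>. (\<lambda>\<omega>. \<epsilon> * indicator A \<omega>) \<omega> + (?c - \<epsilon>)) undefined \<le> ?c - \<epsilon>"
    using k r unfolding EE_def by (simp add: E_const)
  then have "E 0 (\<lambda>\<omega>. \<epsilon> * indicator A \<omega>) undefined + (?c - \<epsilon>) \<le> ?c - \<epsilon>"
    using E_transl[OF sH] by simp
  then have "\<epsilon> * EE E (indicator A) \<le> 0"
    unfolding EE_def using E_homog[OF ind_H[OF AF], of \<epsilon> 0] e by simp
  then have "EE E (indicator A) \<le> 0" using e by (simp add: mult_le_0_iff)
  then show ?thesis using EE_nonneg[OF AF] unfolding A_def by simp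
qed

end


theorem lemma4p3:
  fixes F :: "nat \<Rightarrow> 'a set set" and H :: "('a \<Rightarrow> real) set"
    and E :: "nat \<Rightarrow> ('a \<Rightarrow> real) \<Rightarrow> ('a \<Rightarrow> real)" and X :: "'a \<Rightarrow> real" and n :: nat
  assumes "filtration F" and "Hspace F H" and "SL_expectation F H E"
    and "X \<in> H" and "indep_of_F F H E X n"
    and "(\<exists>c. \<forall>\<omega>. c \<le> X \<omega>) \<or> in_L1b E X"
  shows "qs_eq F E (E n X) (\<lambda>_. EE E X)"
proof -
  note a = assms(1-3)
  let ?c = "EE E X" and ?Y = "E n X"
  define P where "P k = {\<omega>. ?Y \<omega> \<ge> ?c + 1 / real (Suc k)}" for k
  define M where "M k = {\<omega>. ?Y \<omega> \<le> ?c - 1 / real (Suc k)}" for k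
  define Nk where "Nk k = P k \<union> M k" for k
  define N where "N = {\<omega>. ?Y \<omega> \<noteq> ?c}"
  have setF: "?Y -` B \<in> F n" if "B \<in> sets borel" for B
    using meas_set[OF a assms(4) that] .
  have NF: "N \<in> Finf F"
  proof -
    have "?Y -` (- {?c}) \<in> F n" by (rule setF) simp
    moreover have "?Y -` (- {?c}) = N" unfolding N_def by auto
    ultimately show ?thesis using Ft_Finf[OF a] by auto
  qed
  have PF: "P k \<in> Finf F" for k
  proof -
    have "?Y -` {?c + 1 / real (Suc k)..} \<in> F n" by (rule setF) simp
    moreover have "?Y -` {?c + 1 / real (Suc k)..} = P k" unfolding P_def by auto
    ultimately show ?thesis using Ft_Finf[OF a] by auto
  qed
  have MF: "M k \<in> Finf F" for k
  proof -
    have "?Y -` {..?c - 1 / real (Suc k)} \<in> F n" by (rule setF) simp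
    moreover have "?Y -` {..?c - 1 / real (Suc k)} = M k" unfolding M_def by auto
    ultimately show ?thesis using Ft_Finf[OF a] by auto
  qed
  have NkF: "Nk k \<in> Finf F" for k
    unfolding Nk_def Finf_def using PF[of k] MF[of k] unfolding Finf_def by (rule sigma_sets_Un)
  have P0: "EE E (indicator (P k)) = 0" for k
    unfolding P_def by (rule zero_up[OF a assms(4,5)]) simp
  have M0: "EE E (indicator (M k)) = 0" for k
    unfolding M_def by (rule zero_down[OF a assms(4,5)]) simp
  have Nk0: "EE E (indicator (Nk k)) \<le> 0" for k
  proof -
    have "E 0 (indicator (Nk k)) undefined \<le> E 0 (\<lambda>\<omega>. indicator (P k) \<omega> + indicator (M k) \<omega>) undefined"
      by (rule E_mono[OF a ind_H[OF a NkF] add_H[OF a ind_H[OF a PF] ind_H[OF a MF]]])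
        (auto simp: Nk_def indicator_def)
    also have "\<dots> \<le> E 0 (indicator (P k)) undefined + E 0 (indicator (M k)) undefined"
      by (rule E_sub[OF a ind_H[OF a PF] ind_H[OF a MF]])
    finally show ?thesis using P0[of k] M0[of k] unfolding EE_def by simp
  qed
  define Xs where "Xs k = (\<lambda>\<omega>. indicator N \<omega> - indicator (Nk k) \<omega> :: real)" for k
  have XsH: "Xs k \<in> H" for k
  proof -
    have "(\<lambda>\<omega>. indicator N \<omega> + (\<lambda>\<omega>. (-1) * indicator (Nk k) \<omega>) \<omega>) \<in> H"
      by (intro add_H[OF a] scale_H[OF a] ind_H[OF a] NF NkF)
    then show ?thesis unfolding Xs_def by simp
  qed
  have inv: "1 / real (Suc (Suc k)) \<le> 1 / real (Suc k)" for k
    by (simp add: frac_le)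
  have Nkmono: "Nk k \<subseteq> Nk (Suc k)" for k
    using inv[of k] unfolding Nk_def P_def M_def by force
  have NkN: "Nk k \<subseteq> N" for k
    unfolding Nk_def P_def M_def N_def by (auto simp: less_eq_real_def)
  have dec: "decseq (\<lambda>i. Xs i \<omega>)" for \<omega>
  proof (rule decseq_SucI)
    fix i
    show "Xs (Suc i) \<omega> \<le> Xs i \<omega>"
      using Nkmono[of i] unfolding Xs_def by (auto simp: indicator_def)
  qed
  have lim: "(\<lambda>i. Xs i \<omega>) \<longlonglongrightarrow> 0" for \<omega>
  proof (rule tendsto_eventually)
    show "\<forall>\<^sub>F i in sequentially. Xs i \<omega> = 0"
    proof (cases "\<omega> \<in> N")
      case False
      then show ?thesis using NkN unfolding Xs_def by (auto simp: indicator_def eventually_sequentially)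
    next
      case True
      then have "\<bar>?Y \<omega> - ?c\<bar> > 0" unfolding N_def by simp
      then obtain k0 where k0: "inverse (real (Suc k0)) < \<bar>?Y \<omega> - ?c\<bar>"
        using reals_Archimedean by blast
      have "\<omega> \<in> Nk k" if "k \<ge> k0" for k
      proof -
        have "1 / real (Suc k) \<le> 1 / real (Suc k0)" using that by (simp add: frac_le)
        then have "1 / real (Suc k) < \<bar>?Y \<omega> - ?c\<bar>" using k0 by (simp add: inverse_eq_divide)
        then show ?thesis unfolding Nk_def P_def M_def by (auto simp: abs_if split: if_splits)
      qed
      then show ?thesis using True unfolding Xs_def eventually_sequentially
        by (auto simp: indicator_def)
    qed
  qed
  have conv: "(\<lambda>i. EE E (Xs i)) \<longlonglongrightarrow> 0"
    by (rule E_cont[OF a XsH dec lim])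
  have bound: "EE E (indicator N) \<le> EE E (Xs k)" for k
  proof -
    have "indicator N = (\<lambda>\<omega>. indicator (Nk k) \<omega> + Xs k \<omega>)" unfolding Xs_def by auto
    then have "E 0 (indicator N) undefined = E 0 (\<lambda>\<omega>. indicator (Nk k) \<omega> + Xs k \<omega>) undefined" by simp
    also have "\<dots> \<le> E 0 (indicator (Nk k)) undefined + E 0 (Xs k) undefined"
      by (rule E_sub[OF a ind_H[OF a NkF] XsH])
    finally show ?thesis using Nk0[of k] unfolding EE_def by simp
  qed
  have "EE E (indicator N) \<le> 0"
    using LIMSEQ_le_const[OF conv] bound by blast
  then have "EE E (indicator N) = 0" using EE_nonneg[OF a NF] by simp
  moreover have "\<forall>\<omega>. \<omega> \<notin> N \<longrightarrow> ?Y \<omega> = ?c" unfolding N_def by simp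
  ultimately show ?thesis unfolding qs_eq_def using NF by blast
qed

end
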